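(* Let $U$ be a finite nonempty set, $(T,I,N)$ an IMTL triplet, $\widetilde{R}$ a $T$-preorder relation on $U$, $A$ a fuzzy set on $U$, and $L:\mathbb{R}\times\mathbb{R}\to\mathbb{R}^+$ a loss function of $\lor$-type. Let $\hat{A}:U\to[0,1]$ be an optimal solution of $$\text{minimize }\sum_{u\in U}L(A(u),\hat{A}(u))\quad\text{subject to } T(\widetilde{R}(u,v),\hat{A}(v))\le\hat{A}(u)\ (u,v\in U),\quad 0\le\hat{A}(u)\le1\ (u\in U),$$ and let $U^-=\{u;\hat{A}(u)<A(u)\}$, $U^0=\{u;\hat{A}(u)=A(u)\}$, $U^+=\{u;\hat{A}(u)>A(u)\}$. Then: for every $u\in U^+$ there is $v\in U^-\cup U^0$ such that $\widetilde{R}^+_{\hat{A}(v)}(v)$ is adjacent to $\widetilde{R}^-_{N(\hat{A}(u))}(u)$; and for every $u\in U^-$ there is $v\in U^+\cup U^0$ such that $\widetilde{R}^-_{N(\hat{A}(v))}(v)$ is adjacent to $\widetilde{R}^+_{\hat{A}(u)}(u)$.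
   Context: A residual triplet $(T,I,N)$ consists of a left-continuous $t$-norm $T$, its residual implicator $I(x,y)=\sup\{\beta\in[0,1]: T(x,\beta)\le y\}$ and $N(x)=I(x,0)$; it is IMTL if $N$ is involutive. $\widetilde{R}:U\times U\to[0,1]$ is a $T$-preorder if reflexive and $T$-transitive. Granules: $\widetilde{R}^+_\lambda(u)$ is the fuzzy set $w\mapsto T(\widetilde{R}(w,u),\lambda)$ and $\widetilde{R}^-_\lambda(v)$ is $w\mapsto T(\widetilde{R}(v,w),\lambda)$. Adjacency: for $x,y\in U$, $\widetilde{R}^-_{\lambda_2}(y)$ is adjacent to $\widetilde{R}^+_{\lambda_1}(x)$ if $\lambda_1=I(\lambda_2,N(\widetilde{R}(y,x)))$; $\widetilde{R}^+_{\lambda_1}(x)$ is adjacent to $\widetilde{R}^-_{\lambda_2}(y)$ if $\lambda_2=I(\lambda_1,N(\widetilde{R}(y,x)))$. A loss function $L$ is of $\lor$-type if for every real $a$: $L(a,a)=0$; $x\mapsto L(x,a)$ and $x\mapsto L(a,x)$ are increasing for $x>a$ and decreasing for $x<a$. *)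

theory Defs
  imports Complex_Main
begin

definition tnorm :: "(real \<Rightarrow> real \<Rightarrow> real) \<Rightarrow> bool" where
  "tnorm T \<longleftrightarrow>
     (\<forall>x\<in>{0..1}. \<forall>y\<in>{0..1}. T x y \<in> {0..1}) \<and>
     (\<forall>x\<in>{0..1}. \<forall>y\<in>{0..1}. T x y = T y x) \<and>
     (\<forall>x\<in>{0..1}. \<forall>y\<in>{0..1}. \<forall>z\<in>{0..1}. T (T x y) z = T x (T y z)) \<and>
     (\<forall>x\<in>{0..1}. \<forall>x'\<in>{0..1}. \<forall>y\<in>{0..1}. x \<le> x' \<longrightarrow> T x y \<le> T x' y) \<and>
     (\<forall>x\<in>{0..1}. T x 1 = x)"

definition left_continuous_tnorm :: "(real \<Rightarrow> real \<Rightarrow> real) \<Rightarrow> bool" where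
  "left_continuous_tnorm T \<longleftrightarrow> tnorm T \<and>
     (\<forall>y\<in>{0..1}. \<forall>x\<in>{0<..1}. ((\<lambda>z. T z y) \<longlongrightarrow> T x y) (at_left x))"

definition residual :: "(real \<Rightarrow> real \<Rightarrow> real) \<Rightarrow> real \<Rightarrow> real \<Rightarrow> real" where
  "residual T x y = Sup {\<beta>. 0 \<le> \<beta> \<and> \<beta> \<le> 1 \<and> T x \<beta> \<le> y}"

definition resneg :: "(real \<Rightarrow> real \<Rightarrow> real) \<Rightarrow> real \<Rightarrow> real" where
  "resneg T x = residual T x 0"

text \<open>IMTL triplet (T, I, N): T left-continuous, I its residual, N(x)=I(x,0) involutive.\<close>
definition IMTL :: "(real \<Rightarrow> real \<Rightarrow> real) \<Rightarrow> bool" where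
  "IMTL T \<longleftrightarrow> left_continuous_tnorm T \<and>
     (\<forall>x\<in>{0..1}. resneg T (resneg T x) = x)"

definition T_preorder :: "(real \<Rightarrow> real \<Rightarrow> real) \<Rightarrow> 'a set \<Rightarrow> ('a \<Rightarrow> 'a \<Rightarrow> real) \<Rightarrow> bool" where
  "T_preorder T U R \<longleftrightarrow>
     (\<forall>u\<in>U. \<forall>v\<in>U. R u v \<in> {0..1}) \<and>
     (\<forall>u\<in>U. R u u = 1) \<and>
     (\<forall>u\<in>U. \<forall>v\<in>U. \<forall>w\<in>U. T (R u v) (R v w) \<le> R u w)"

definition fuzzy_set_on :: "'a set \<Rightarrow> ('a \<Rightarrow> real) \<Rightarrow> bool" where
  "fuzzy_set_on U A \<longleftrightarrow> (\<forall>u\<in>U. A u \<in> {0..1})"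

definition vee_type_loss :: "(real \<Rightarrow> real \<Rightarrow> real) \<Rightarrow> bool" where
  "vee_type_loss L \<longleftrightarrow>
     (\<forall>x y. 0 \<le> L x y) \<and>
     (\<forall>a. L a a = 0 \<and>
        (\<forall>x y. a < x \<and> x < y \<longrightarrow> L x a < L y a \<and> L a x < L a y) \<and>
        (\<forall>x y. x < y \<and> y < a \<longrightarrow> L y a < L x a \<and> L a y < L a x))"

definition feasible :: "(real \<Rightarrow> real \<Rightarrow> real) \<Rightarrow> 'a set \<Rightarrow> ('a \<Rightarrow> 'a \<Rightarrow> real) \<Rightarrow> ('a \<Rightarrow> real) \<Rightarrow> bool" where
  "feasible T U R B \<longleftrightarrow>
     (\<forall>u\<in>U. \<forall>v\<in>U. T (R u v) (B v) \<le> B u) \<and> (\<forall>u\<in>U. 0 \<le> B u \<and> B u \<le> 1)"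

definition optimal_solution ::
  "(real \<Rightarrow> real \<Rightarrow> real) \<Rightarrow> 'a set \<Rightarrow> ('a \<Rightarrow> 'a \<Rightarrow> real) \<Rightarrow> (real \<Rightarrow> real \<Rightarrow> real)
     \<Rightarrow> ('a \<Rightarrow> real) \<Rightarrow> ('a \<Rightarrow> real) \<Rightarrow> bool" where
  "optimal_solution T U R L A Ah \<longleftrightarrow> feasible T U R Ah \<and>
     (\<forall>B. feasible T U R B \<longrightarrow> (\<Sum>u\<in>U. L (A u) (Ah u)) \<le> (\<Sum>u\<in>U. L (A u) (B u)))"

text \<open>Granules R^+_lam(u) = (w |-> T(R(w,u),lam)) and R^-_lam(v) = (w |-> T(R(v,w),lam)),
  represented by their labels (point, level).\<close>

text \<open>R^-_{l2}(y) is adjacent to R^+_{l1}(x)  iff  l1 = I(l2, N(R(y,x))).\<close>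
definition minus_adj_plus ::
  "(real \<Rightarrow> real \<Rightarrow> real) \<Rightarrow> ('a \<Rightarrow> 'a \<Rightarrow> real) \<Rightarrow> 'a \<Rightarrow> real \<Rightarrow> 'a \<Rightarrow> real \<Rightarrow> bool" where
  "minus_adj_plus T R y l2 x l1 \<longleftrightarrow> l1 = residual T l2 (resneg T (R y x))"

text \<open>R^+_{l1}(x) is adjacent to R^-_{l2}(y)  iff  l2 = I(l1, N(R(y,x))).\<close>
definition plus_adj_minus ::
  "(real \<Rightarrow> real \<Rightarrow> real) \<Rightarrow> ('a \<Rightarrow> 'a \<Rightarrow> real) \<Rightarrow> 'a \<Rightarrow> real \<Rightarrow> 'a \<Rightarrow> real \<Rightarrow> bool" where
  "plus_adj_minus T R x l1 y l2 \<longleftrightarrow> l2 = residual T l1 (resneg T (R y x))"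

end

theory Submission
  imports Defs
begin

lemma tn01:
  assumes "tnorm T" "0 \<le> x" "x \<le> 1" "0 \<le> y" "y \<le> 1"
  shows "0 \<le> T x y" "T x y \<le> 1"
  using assms unfolding tnorm_def by auto

lemma tn_comm:
  assumes "tnorm T" "0 \<le> x" "x \<le> 1" "0 \<le> y" "y \<le> 1"
  shows "T x y = T y x"
  using assms unfolding tnorm_def by auto

lemma tn_assoc:
  assumes "tnorm T" "0 \<le> x" "x \<le> 1" "0 \<le> y" "y \<le> 1" "0 \<le> z" "z \<le> 1"
  shows "T (T x y) z = T x (T y z)"
  using assms unfolding tnorm_def by auto

lemma tn_mono1:
  assumes "tnorm T" "0 \<le> x" "x \<le> x'" "x' \<le> 1" "0 \<le> y" "y \<le> 1"
  shows "T x y \<le> T x' y"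
  using assms unfolding tnorm_def by auto

lemma tn_mono2:
  assumes "tnorm T" "0 \<le> y" "y \<le> y'" "y' \<le> 1" "0 \<le> x" "x \<le> 1"
  shows "T x y \<le> T x y'"
proof -
  have "T x y = T y x" using assms tn_comm[of T x y] by auto
  also have "\<dots> \<le> T y' x" using assms tn_mono1[of T y y' x] by auto
  also have "\<dots> = T x y'" using assms tn_comm[of T x y'] by auto
  finally show ?thesis .
qed

lemma tn_one1:
  assumes "tnorm T" "0 \<le> x" "x \<le> 1"
  shows "T x 1 = x"
proof -
  have "\<forall>x\<in>{0..1}. T x 1 = x" using assms(1) unfolding tnorm_def by blast
  then show ?thesis using assms by simp
qed

lemma tn_one2:
  assumes "tnorm T" "0 \<le> x" "x \<le> 1"
  shows "T 1 x = x"
proof -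
  have "T 1 x = T x 1" using assms tn_comm[of T 1 x] by simp
  then show ?thesis using assms tn_one1[of T x] by simp
qed

lemma tn_zero1:
  assumes "tnorm T" "0 \<le> x" "x \<le> 1"
  shows "T 0 x = 0"
proof -
  have "T 0 x \<le> T 0 1" using assms tn_mono2[of T x 1 0] by auto
  also have "\<dots> = 0" using assms tn_one1[of T 0] by auto
  finally show ?thesis using tn01[of T 0 x] assms by auto
qed

lemma tn_zero2:
  assumes "tnorm T" "0 \<le> x" "x \<le> 1"
  shows "T x 0 = 0"
proof -
  have "T x 0 = T 0 x" using assms tn_comm[of T x 0] by simp
  then show ?thesis using assms tn_zero1[of T x] by simp
qed

section \<open>Residuation\<close>

lemma res_facts:
  assumes lc: "left_continuous_tnorm T" and x: "0 \<le> x" "x \<le> 1" and y: "0 \<le> y" "y \<le> 1"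
  shows "0 \<le> residual T x y" "residual T x y \<le> 1"
    "\<And>z. 0 \<le> z \<Longrightarrow> z \<le> 1 \<Longrightarrow> T x z \<le> y \<longleftrightarrow> z \<le> residual T x y"
proof -
  have tn: "tnorm T" using lc unfolding left_continuous_tnorm_def by auto
  define S where "S = {\<beta>. 0 \<le> \<beta> \<and> \<beta> \<le> 1 \<and> T x \<beta> \<le> y}"
  have rs: "residual T x y = Sup S" unfolding residual_def S_def by simp
  have S0: "0 \<in> S" unfolding S_def using tn_zero2[OF tn x] y by auto
  have Sne: "S \<noteq> {}" using S0 by auto
  have bdd: "bdd_above S" unfolding S_def by (auto intro: bdd_aboveI[of _ 1])
  have s0: "0 \<le> Sup S" using cSup_upper[OF S0 bdd] .
  have s1: "Sup S \<le> 1" using Sne by (intro cSup_least) (auto simp: S_def)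
  show "0 \<le> residual T x y" "residual T x y \<le> 1" using s0 s1 rs by auto
  have key: "T x (Sup S) \<le> y"
  proof (cases "Sup S = 0")
    case True
    then show ?thesis using tn_zero2[OF tn x] y by simp
  next
    case False
    then have spos: "0 < Sup S" using s0 by auto
    have lim: "((\<lambda>z. T z x) \<longlongrightarrow> T (Sup S) x) (at_left (Sup S))"
      using lc spos s1 x unfolding left_continuous_tnorm_def by auto
    have ev: "eventually (\<lambda>z. T z x \<le> y) (at_left (Sup S))"
      using eventually_at_left_real[OF spos]
    proof (rule eventually_mono)
      fix z assume z: "z \<in> {0<..<Sup S}"
      then obtain b where b: "b \<in> S" "z < b" using less_cSupD[OF Sne] by auto
      have "T z x \<le> T b x" using tn_mono1[of T z b x] z b x tn by (auto simp: S_def)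
      also have "\<dots> = T x b" using tn_comm[of T b x] b x tn by (auto simp: S_def)
      also have "\<dots> \<le> y" using b by (auto simp: S_def)
      finally show "T z x \<le> y" .
    qed
    have "T (Sup S) x \<le> y"
      using tendsto_upperbound[OF lim ev] by simp
    then show ?thesis using tn_comm[of T x "Sup S"] tn x s0 s1 by auto
  qed
  fix z :: real assume z: "0 \<le> z" "z \<le> 1"
  show "T x z \<le> y \<longleftrightarrow> z \<le> residual T x y"
  proof
    assume "T x z \<le> y"
    then have "z \<in> S" using z by (auto simp: S_def)
    then show "z \<le> residual T x y" using cSup_upper[OF _ bdd] rs by auto
  next
    assume "z \<le> residual T x y"
    then have "T x z \<le> T x (Sup S)" using tn_mono2[of T z "Sup S" x] tn z x s1 rs by auto
    then show "T x z \<le> y" using key by auto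
  qed
qed


lemma neg_facts:
  assumes lc: "left_continuous_tnorm T" and x: "0 \<le> x" "x \<le> 1"
  shows "0 \<le> resneg T x" "resneg T x \<le> 1"
    "\<And>z. 0 \<le> z \<Longrightarrow> z \<le> 1 \<Longrightarrow> T x z = 0 \<longleftrightarrow> z \<le> resneg T x"
proof -
  have tn: "tnorm T" using lc unfolding left_continuous_tnorm_def by auto
  note r = res_facts[OF lc x order_refl zero_le_one]
  show "0 \<le> resneg T x" "resneg T x \<le> 1" using r unfolding resneg_def by auto
  fix z :: real assume z: "0 \<le> z" "z \<le> 1"
  have "0 \<le> T x z" using tn01[OF tn x z] by simp
  then show "T x z = 0 \<longleftrightarrow> z \<le> resneg T x" using r(3)[OF z] unfolding resneg_def by auto
qed

lemma res_neg:
  assumes lc: "left_continuous_tnorm T" and x: "0 \<le> x" "x \<le> 1" and y: "0 \<le> y" "y \<le> 1"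
  shows "residual T x (resneg T y) = resneg T (T x y)"
proof -
  have tn: "tnorm T" using lc unfolding left_continuous_tnorm_def by auto
  have ny: "0 \<le> resneg T y" "resneg T y \<le> 1" using neg_facts[OF lc y] by auto
  have txy: "0 \<le> T x y" "T x y \<le> 1" using tn01[OF tn x y] by auto
  define a where "a = residual T x (resneg T y)"
  define b where "b = resneg T (T x y)"
  have a01: "0 \<le> a" "a \<le> 1" using res_facts[OF lc x ny] a_def by auto
  have b01: "0 \<le> b" "b \<le> 1" using neg_facts[OF lc txy] b_def by auto
  have eq: "z \<le> a \<longleftrightarrow> z \<le> b" if z: "0 \<le> z" "z \<le> 1" for z
  proof -
    have txz: "0 \<le> T x z" "T x z \<le> 1" using tn01[OF tn x z] by auto
    have "z \<le> a \<longleftrightarrow> T x z \<le> resneg T y" using res_facts(3)[OF lc x ny z] a_def by simp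
    also have "\<dots> \<longleftrightarrow> T y (T x z) = 0" using neg_facts(3)[OF lc y txz] by simp
    also have "T y (T x z) = T (T x y) z"
    proof -
      have "T (T x y) z = T x (T y z)" using tn_assoc[OF tn x y z] .
      also have "T y z = T z y" using tn_comm[OF tn y z] .
      also have "T x (T z y) = T (T x z) y" using tn_assoc[OF tn x z y] by simp
      also have "\<dots> = T y (T x z)" using tn_comm[OF tn txz y] .
      finally show ?thesis by simp
    qed
    also have "T (T x y) z = 0 \<longleftrightarrow> z \<le> b" using neg_facts(3)[OF lc txy z] b_def by simp
    finally show ?thesis .
  qed
  have "a \<le> b" using eq[OF a01] by simp
  moreover have "b \<le> a" using eq[OF b01] by simp
  ultimately show ?thesis using a_def b_def by simp
qed

lemma contrapos_T:
  assumes lc: "left_continuous_tnorm T" and inv: "\<forall>x\<in>{0..1}. resneg T (resneg T x) = x"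
    and a: "0 \<le> a" "a \<le> 1" and b: "0 \<le> b" "b \<le> 1" and c: "0 \<le> c" "c \<le> 1"
  shows "T a b \<le> c \<longleftrightarrow> T a (resneg T c) \<le> resneg T b"
proof -
  have tn: "tnorm T" using lc unfolding left_continuous_tnorm_def by auto
  define d where "d = resneg T c"
  have d: "0 \<le> d" "d \<le> 1" using neg_facts[OF lc c] d_def by auto
  have cd: "c = resneg T d" using inv c d_def by auto
  have tab: "0 \<le> T a b" "T a b \<le> 1" using tn01[OF tn a b] by auto
  have tad: "0 \<le> T a d" "T a d \<le> 1" using tn01[OF tn a d] by auto
  have "T a b \<le> c \<longleftrightarrow> T d (T a b) = 0" using neg_facts(3)[OF lc d tab] cd by simp
  also have "T d (T a b) = T b (T a d)"
  proof -
    have "T d (T a b) = T (T a b) d" using tn_comm[OF tn d tab] .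
    also have "\<dots> = T a (T b d)" using tn_assoc[OF tn a b d] .
    also have "T b d = T d b" using tn_comm[OF tn b d] .
    also have "T a (T d b) = T (T a d) b" using tn_assoc[OF tn a d b] by simp
    also have "\<dots> = T b (T a d)" using tn_comm[OF tn tad b] .
    finally show ?thesis .
  qed
  also have "T b (T a d) = 0 \<longleftrightarrow> T a d \<le> resneg T b" using neg_facts(3)[OF lc b tad] .
  finally show ?thesis using d_def by simp
qed

lemma neg_anti:
  assumes lc: "left_continuous_tnorm T" and x: "0 \<le> x" "x \<le> x'" "x' \<le> 1"
  shows "resneg T x' \<le> resneg T x"
proof -
  have tn: "tnorm T" using lc unfolding left_continuous_tnorm_def by auto
  have x': "0 \<le> x'" "x' \<le> 1" using x by auto
  have n: "0 \<le> resneg T x'" "resneg T x' \<le> 1" using neg_facts[OF lc x'] by auto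
  have "T x (resneg T x') \<le> T x' (resneg T x')" using tn_mono1[OF tn x(1,2) x'(2) n] .
  also have "T x' (resneg T x') = 0" using neg_facts(3)[OF lc x' n] by simp
  finally have "T x (resneg T x') = 0" using tn01[OF tn _ _ n, of x] x by auto
  then show ?thesis using neg_facts(3)[OF lc _ _ n, of x] x by auto
qed

lemma core:
  fixes U :: "'a set" and R :: "'a \<Rightarrow> 'a \<Rightarrow> real" and P Q :: "'a \<Rightarrow> real"
  assumes tn: "tnorm T" and fin: "finite U"
    and R01: "\<forall>u\<in>U. \<forall>v\<in>U. 0 \<le> R u v \<and> R u v \<le> 1"
    and Rrefl: "\<forall>u\<in>U. R u u = 1"
    and Rtrans: "\<forall>u\<in>U. \<forall>v\<in>U. \<forall>w\<in>U. T (R u v) (R v w) \<le> R u w"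
    and P01: "\<forall>u\<in>U. 0 \<le> P u \<and> P u \<le> 1"
    and Q01: "\<forall>u\<in>U. 0 \<le> Q u \<and> Q u \<le> 1"
    and feas: "\<forall>u\<in>U. \<forall>v\<in>U. T (R u v) (P v) \<le> P u"
    and opt: "\<And>B. \<forall>u\<in>U. \<forall>v\<in>U. T (R u v) (B v) \<le> B u \<Longrightarrow>
                   \<forall>w\<in>U. min (P w) (Q w) \<le> B w \<and> B w \<le> P w \<Longrightarrow>
                   \<forall>w\<in>U. Q w < P w \<longrightarrow> B w = P w"
    and u: "u \<in> U" "Q u < P u"
  shows "\<exists>v\<in>U. P v \<le> Q v \<and> P u = T (R u v) (P v)"
proof -
  define C where "C v = min (P v) (Q v)" for v
  have C01: "0 \<le> C v" "C v \<le> 1" if "v \<in> U" for v using P01 Q01 that C_def by auto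
  have CP: "C v \<le> P v" for v using C_def by auto
  have P01': "0 \<le> P v" "P v \<le> 1" if "v \<in> U" for v using P01 that by auto
  have R01': "0 \<le> R a b" "R a b \<le> 1" if "a \<in> U" "b \<in> U" for a b using R01 that by auto
  define B where "B w = Max ((\<lambda>v. T (R w v) (C v)) ` U)" for w
  have Une: "U \<noteq> {}" using u by auto
  have Bin: "\<exists>z\<in>U. B w = T (R w z) (C z)" for w
  proof -
    have "B w \<in> (\<lambda>v. T (R w v) (C v)) ` U" unfolding B_def using fin Une by (intro Max_in) auto
    then show ?thesis by auto
  qed
  have Bge: "T (R w v) (C v) \<le> B w" if "v \<in> U" for w v
    unfolding B_def using fin that by (intro Max_ge) auto
  have TRle: "T (R w z) (C z) \<le> P w" if "w \<in> U" "z \<in> U" for w z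
  proof -
    have "T (R w z) (C z) \<le> T (R w z) (P z)"
      using tn_mono2[OF tn C01(1)[OF that(2)] CP P01'(2)[OF that(2)] R01'[OF that]] .
    also have "\<dots> \<le> P w" using feas that by auto
    finally show ?thesis .
  qed
  have Ble: "B w \<le> P w" if "w \<in> U" for w
    using Bin[of w] TRle[OF that] by auto
  have CleB: "C w \<le> B w" if "w \<in> U" for w
    using Bge[OF that, of w] Rrefl that tn_one2[OF tn C01[OF that]] by auto
  have B01: "0 \<le> B w" "B w \<le> 1" if "w \<in> U" for w
    using CleB[OF that] C01[OF that] Ble[OF that] P01'[OF that] by auto
  have Bfeas: "\<forall>a\<in>U. \<forall>b\<in>U. T (R a b) (B b) \<le> B a"
  proof (intro ballI)
    fix a b assume ab: "a \<in> U" "b \<in> U"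
    obtain z where z: "z \<in> U" "B b = T (R b z) (C z)" using Bin by blast
    have "T (R a b) (B b) = T (T (R a b) (R b z)) (C z)"
      using z tn_assoc[OF tn R01'[OF ab] R01'[OF ab(2) z(1)] C01[OF z(1)]] by simp
    also have "\<dots> \<le> T (R a z) (C z)"
      using tn_mono1[OF tn _ _ _ C01[OF z(1)], of "T (R a b) (R b z)" "R a z"]
        tn01[OF tn R01'[OF ab] R01'[OF ab(2) z(1)]] Rtrans ab z R01'[OF ab(1) z(1)] by auto
    also have "\<dots> \<le> B a" using Bge z by auto
    finally show "T (R a b) (B b) \<le> B a" .
  qed
  have Beq: "B w = P w" if "w \<in> U" "Q w < P w" for w
    using opt[OF Bfeas] CleB Ble C_def that by auto
  define M where "M x = {v\<in>U. P x = T (R x v) (C v)}" for x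
  have Mne: "M x \<noteq> {}" if "x \<in> U" "Q x < P x" for x
    using Bin[of x] Beq[OF that] M_def by auto
  have Mirr: "x \<notin> M x" if "x \<in> U" "Q x < P x" for x
    using that Rrefl tn_one2[OF tn C01[OF that(1)]] M_def C_def by auto
  have Mtrans: "M w \<subseteq> M x" if "x \<in> U" "w \<in> M x" "Q w < P w" for x w
  proof
    fix z assume "z \<in> M w"
    then have z: "z \<in> U" "P w = T (R w z) (C z)" using M_def by auto
    have w: "w \<in> U" "P x = T (R x w) (C w)" using that M_def by auto
    have "P x \<le> T (R x w) (P w)"
      using w tn_mono2[OF tn C01(1)[OF w(1)] CP P01'(2)[OF w(1)] R01'[OF that(1) w(1)]] by simp
    also have "\<dots> = T (T (R x w) (R w z)) (C z)"
      using z tn_assoc[OF tn R01'[OF that(1) w(1)] R01'[OF w(1) z(1)] C01[OF z(1)]] by simp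
    also have "\<dots> \<le> T (R x z) (C z)"
      using tn_mono1[OF tn _ _ _ C01[OF z(1)], of "T (R x w) (R w z)" "R x z"]
        tn01[OF tn R01'[OF that(1) w(1)] R01'[OF w(1) z(1)]] Rtrans that(1) w z
        R01'[OF that(1) z(1)] by auto
    finally have "P x \<le> T (R x z) (C z)" .
    moreover have "T (R x z) (C z) \<le> P x" using TRle[OF that(1) z(1)] .
    ultimately show "z \<in> M x" using M_def z by auto
  qed
  have finM: "finite (M x)" for x using fin M_def by auto
  show ?thesis
  proof (rule ccontr)
    assume H: "\<not> ?thesis"
    have sub: "Q v < P v" if "v \<in> M u" for v
    proof (rule ccontr)
      assume "\<not> Q v < P v"
      then have "C v = P v" "P v \<le> Q v" using C_def by auto
      then show False using H that M_def by auto
    qed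
    obtain w0 where "w0 \<in> M u" using Mne[OF u] by auto
    then obtain w where w: "w \<in> M u" and wmin: "\<forall>y. y \<in> M u \<longrightarrow> card (M w) \<le> card (M y)"
      using ex_has_least_nat[of "\<lambda>w. w \<in> M u" w0 "\<lambda>w. card (M w)"] by blast
    have wU: "w \<in> U" using w M_def by auto
    have wQ: "Q w < P w" using sub[OF w] .
    obtain w' where w': "w' \<in> M w" using Mne[OF wU wQ] by auto
    have w'u: "w' \<in> M u" using Mtrans[OF u(1) w wQ] w' by auto
    have w'U: "w' \<in> U" using w' M_def by auto
    have w'Q: "Q w' < P w'" using sub[OF w'u] .
    have "M w' \<subset> M w" using Mtrans[OF wU w' w'Q] Mirr[OF w'U w'Q] w' by auto
    then have "card (M w') < card (M w)" using psubset_card_mono finM by auto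
    then show False using wmin w'u by auto
  qed
qed


section \<open>Loss function facts\<close>

lemma loss_term:
  assumes L: "vee_type_loss L" and x: "min a b \<le> x" "x \<le> max a b"
  shows "L a x \<le> L a b" "x \<noteq> b \<Longrightarrow> L a x < L a b"
proof -
  have Lnn: "\<And>p q. 0 \<le> L p q" and Laa: "L a a = 0"
    and up: "\<And>p q. a < p \<Longrightarrow> p < q \<Longrightarrow> L a p < L a q"
    and dn: "\<And>p q. p < q \<Longrightarrow> q < a \<Longrightarrow> L a q < L a p"
    using L unfolding vee_type_loss_def by blast+
  have strict: "L a x < L a b" if "x \<noteq> b"
  proof (cases "a < b")
    case True
    then have ax: "a \<le> x" "x < b" using x that by auto
    show ?thesis
    proof (cases "x = a")
      case True
      have "L a ((a+b)/2) < L a b" using up[of "(a+b)/2" b] \<open>a < b\<close> by auto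
      then show ?thesis using True Laa Lnn[of a "(a+b)/2"] by auto
    next
      case False
      then show ?thesis using up[of x b] ax by auto
    qed
  next
    case False
    then have ax: "x \<le> a" "b < x" using x that by auto
    show ?thesis
    proof (cases "x = a")
      case True
      have "L a ((a+b)/2) < L a b" using dn[of b "(a+b)/2"] ax by auto
      then show ?thesis using True Laa Lnn[of a "(a+b)/2"] by auto
    next
      case False
      then show ?thesis using dn[of b x] ax by auto
    qed
  qed
  then show "x \<noteq> b \<Longrightarrow> L a x < L a b" .
  show "L a x \<le> L a b" using strict by (cases "x = b") auto
qed

lemma loss_opt:
  assumes L: "vee_type_loss L" and fin: "finite U"
    and opt: "optimal_solution T U R L A Ah" and fB: "feasible T U R B"
    and btw: "\<forall>w\<in>U. min (A w) (Ah w) \<le> B w \<and> B w \<le> max (A w) (Ah w)"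
  shows "\<forall>w\<in>U. B w = Ah w"
proof (rule ccontr)
  assume "\<not> ?thesis"
  then obtain w where w: "w \<in> U" "B w \<noteq> Ah w" by auto
  have le: "\<forall>x\<in>U. L (A x) (B x) \<le> L (A x) (Ah x)" using loss_term(1)[OF L] btw by auto
  have lt: "\<exists>x\<in>U. L (A x) (B x) < L (A x) (Ah x)" using loss_term(2)[OF L] btw w by blast
  have "(\<Sum>x\<in>U. L (A x) (B x)) < (\<Sum>x\<in>U. L (A x) (Ah x))"
    using sum_strict_mono_ex1[OF fin le lt] .
  moreover have "(\<Sum>x\<in>U. L (A x) (Ah x)) \<le> (\<Sum>x\<in>U. L (A x) (B x))"
    using opt fB unfolding optimal_solution_def by auto
  ultimately show False by simp
qed

theorem corollary2:
  fixes U :: "'a set" and T :: "real \<Rightarrow> real \<Rightarrow> real" and R :: "'a \<Rightarrow> 'a \<Rightarrow> real"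
    and A Ah :: "'a \<Rightarrow> real" and L :: "real \<Rightarrow> real \<Rightarrow> real"
  assumes "finite U" and "U \<noteq> {}"
    and "IMTL T"
    and "T_preorder T U R"
    and "fuzzy_set_on U A"
    and "vee_type_loss L"
    and "optimal_solution T U R L A Ah"
  shows "(\<forall>u\<in>{u\<in>U. Ah u > A u}. \<exists>v\<in>{v\<in>U. Ah v \<le> A v}.
            plus_adj_minus T R v (Ah v) u (resneg T (Ah u)))
       \<and> (\<forall>u\<in>{u\<in>U. Ah u < A u}. \<exists>v\<in>{v\<in>U. Ah v \<ge> A v}.
            minus_adj_plus T R v (resneg T (Ah v)) u (Ah u))"
proof -
  note fin = assms(1)
  have lc: "left_continuous_tnorm T" and inv: "\<forall>x\<in>{0..1}. resneg T (resneg T x) = x"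
    using assms(3) unfolding IMTL_def by auto
  have tn: "tnorm T" using lc unfolding left_continuous_tnorm_def by auto
  have R01: "\<forall>u\<in>U. \<forall>v\<in>U. 0 \<le> R u v \<and> R u v \<le> 1"
    and Rrefl: "\<forall>u\<in>U. R u u = 1"
    and Rtrans: "\<forall>u\<in>U. \<forall>v\<in>U. \<forall>w\<in>U. T (R u v) (R v w) \<le> R u w"
    using assms(4) unfolding T_preorder_def by auto
  have A01: "\<forall>u\<in>U. 0 \<le> A u \<and> A u \<le> 1" using assms(5) unfolding fuzzy_set_on_def by auto
  note L = assms(6) and opt = assms(7)
  have feasAh: "feasible T U R Ah" using opt unfolding optimal_solution_def by auto
  have Ah01: "\<forall>u\<in>U. 0 \<le> Ah u \<and> Ah u \<le> 1" and fAh: "\<forall>u\<in>U. \<forall>v\<in>U. T (R u v) (Ah v) \<le> Ah u"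
    using feasAh unfolding feasible_def by auto
  define N where "N = resneg T"
  have N01: "0 \<le> N x" "N x \<le> 1" if "0 \<le> x" "x \<le> 1" for x
    using neg_facts[OF lc that] N_def by auto
  have NN: "N (N x) = x" if "0 \<le> x" "x \<le> 1" for x using inv that N_def by auto
  have Nanti: "N y \<le> N x" if "0 \<le> x" "x \<le> y" "y \<le> 1" for x y
    using neg_anti[OF lc that] N_def by auto
  have Nstrict: "N y < N x" if "0 \<le> x" "x < y" "y \<le> 1" for x y
  proof -
    have "N y \<le> N x" using Nanti that by auto
    moreover have "N y \<noteq> N x" using NN[of x] NN[of y] that by force
    ultimately show ?thesis by auto
  qed
  have part1: "\<exists>v\<in>{v\<in>U. Ah v \<le> A v}. plus_adj_minus T R v (Ah v) u (resneg T (Ah u))"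
    if u: "u \<in> U" "A u < Ah u" for u
  proof -
    have "\<exists>v\<in>U. Ah v \<le> A v \<and> Ah u = T (R u v) (Ah v)"
    proof (rule core[OF tn fin R01 Rrefl Rtrans Ah01 A01 fAh _ u])
      fix B assume fB: "\<forall>u\<in>U. \<forall>v\<in>U. T (R u v) (B v) \<le> B u"
        and bd: "\<forall>w\<in>U. min (Ah w) (A w) \<le> B w \<and> B w \<le> Ah w"
      have B01: "0 \<le> B w \<and> B w \<le> 1" if w: "w \<in> U" for w
      proof -
        have "min (Ah w) (A w) \<le> B w" "B w \<le> Ah w" using bd w by auto
        moreover have "0 \<le> min (Ah w) (A w)" using Ah01 A01 w by auto
        moreover have "Ah w \<le> 1" using Ah01 w by auto
        ultimately show ?thesis by linarith
      qed
      have "feasible T U R B" unfolding feasible_def using fB B01 by auto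
      moreover have "\<forall>w\<in>U. min (A w) (Ah w) \<le> B w \<and> B w \<le> max (A w) (Ah w)"
      proof
        fix w assume w: "w \<in> U"
        have "min (Ah w) (A w) \<le> B w" "B w \<le> Ah w" using bd w by auto
        then show "min (A w) (Ah w) \<le> B w \<and> B w \<le> max (A w) (Ah w)" by linarith
      qed
      ultimately have "\<forall>w\<in>U. B w = Ah w" using loss_opt[OF L fin opt] by blast
      then show "\<forall>w\<in>U. A w < Ah w \<longrightarrow> B w = Ah w" by auto
    qed
    then obtain v where v: "v \<in> U" "Ah v \<le> A v" "Ah u = T (R u v) (Ah v)" by auto
    have "residual T (Ah v) (resneg T (R u v)) = resneg T (T (Ah v) (R u v))"
      using res_neg[OF lc, of "Ah v" "R u v"] Ah01 R01 u v by auto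
    also have "T (Ah v) (R u v) = T (R u v) (Ah v)" using tn_comm[OF tn, of "Ah v" "R u v"] Ah01 R01 u v by auto
    finally show ?thesis using v unfolding plus_adj_minus_def by auto
  qed
  have part2: "\<exists>v\<in>{v\<in>U. Ah v \<ge> A v}. minus_adj_plus T R v (resneg T (Ah v)) u (Ah u)"
    if u: "u \<in> U" "Ah u < A u" for u
  proof -
    define R' where "R' a b = R b a" for a b
    define P where "P a = N (Ah a)" for a
    define Q where "Q a = N (A a)" for a
    have R'01: "\<forall>u\<in>U. \<forall>v\<in>U. 0 \<le> R' u v \<and> R' u v \<le> 1" using R01 R'_def by auto
    have R'refl: "\<forall>u\<in>U. R' u u = 1" using Rrefl R'_def by auto
    have R'trans: "\<forall>u\<in>U. \<forall>v\<in>U. \<forall>w\<in>U. T (R' u v) (R' v w) \<le> R' u w"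
    proof (intro ballI)
      fix a b c assume abc: "a \<in> U" "b \<in> U" "c \<in> U"
      have "T (R b a) (R c b) = T (R c b) (R b a)" using tn_comm[OF tn, of "R b a" "R c b"] R01 abc by auto
      then show "T (R' a b) (R' b c) \<le> R' a c" using Rtrans abc R'_def by auto
    qed
    have P01: "\<forall>u\<in>U. 0 \<le> P u \<and> P u \<le> 1" using N01 Ah01 P_def by auto
    have Q01: "\<forall>u\<in>U. 0 \<le> Q u \<and> Q u \<le> 1" using N01 A01 Q_def by auto
    have fP: "\<forall>a\<in>U. \<forall>b\<in>U. T (R' a b) (P b) \<le> P a"
    proof (intro ballI)
      fix a b assume ab: "a \<in> U" "b \<in> U"
      have "T (R b a) (Ah a) \<le> Ah b" using fAh ab by auto
      then show "T (R' a b) (P b) \<le> P a"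
        using contrapos_T[OF lc inv, of "R b a" "Ah a" "Ah b"] R01 Ah01 ab R'_def P_def N_def by auto
    qed
    have uQ: "Q u < P u" using Nstrict[of "Ah u" "A u"] Ah01 A01 u P_def Q_def by auto
    have "\<exists>v\<in>U. P v \<le> Q v \<and> P u = T (R' u v) (P v)"
    proof (rule core[OF tn fin R'01 R'refl R'trans P01 Q01 fP _ u(1) uQ])
      fix B' assume fB': "\<forall>a\<in>U. \<forall>b\<in>U. T (R' a b) (B' b) \<le> B' a"
        and bd: "\<forall>w\<in>U. min (P w) (Q w) \<le> B' w \<and> B' w \<le> P w"
      have B'01: "0 \<le> B' w" "B' w \<le> 1" if "w \<in> U" for w
      proof -
        have "min (P w) (Q w) \<le> B' w" "B' w \<le> P w" using bd that by auto
        moreover have "0 \<le> min (P w) (Q w)" using P01 Q01 that by auto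
        moreover have "P w \<le> 1" using P01 that by auto
        ultimately show "0 \<le> B' w" "B' w \<le> 1" by linarith+
      qed
      define B where "B w = N (B' w)" for w
      have B01: "0 \<le> B w" "B w \<le> 1" if "w \<in> U" for w using N01 B'01[OF that] B_def by auto
      have fB: "feasible T U R B" unfolding feasible_def
      proof (intro conjI ballI)
        fix a b assume ab: "a \<in> U" "b \<in> U"
        have "T (R a b) (B' a) \<le> B' b" using fB' ab R'_def by auto
        then show "T (R a b) (B b) \<le> B a"
          using contrapos_T[OF lc inv, of "R a b" "B' a" "B' b"] R01 B'01 ab B_def N_def by auto
      qed (use B01 in auto)
      have btw: "\<forall>w\<in>U. min (A w) (Ah w) \<le> B w \<and> B w \<le> max (A w) (Ah w)"
      proof
        fix w assume w: "w \<in> U"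
        have "Ah w \<le> B w"
          using Nanti[of "B' w" "P w"] bd w B'01[OF w] P01 NN[of "Ah w"] Ah01 B_def P_def by auto
        moreover have "B w \<le> max (A w) (Ah w)"
        proof (cases "P w \<le> Q w")
          case True
          then have "P w \<le> B' w" using bd w by auto
          then have "B w \<le> N (P w)" using Nanti[of "P w" "B' w"] P01 B'01[OF w] w B_def by auto
          then show ?thesis using NN[of "Ah w"] Ah01 w P_def by auto
        next
          case False
          then have "Q w \<le> B' w" using bd w by auto
          then have "B w \<le> N (Q w)" using Nanti[of "Q w" "B' w"] Q01 B'01[OF w] w B_def by auto
          then show ?thesis using NN[of "A w"] A01 w Q_def by auto
        qed
        ultimately show "min (A w) (Ah w) \<le> B w \<and> B w \<le> max (A w) (Ah w)" by auto
      qed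
      have eq: "\<forall>w\<in>U. B w = Ah w" using loss_opt[OF L fin opt fB btw] .
      show "\<forall>w\<in>U. Q w < P w \<longrightarrow> B' w = P w"
      proof (intro ballI impI)
        fix w assume w: "w \<in> U"
        have "B' w = N (B w)" using NN B'01[OF w] B_def by auto
        then show "B' w = P w" using eq w P_def by auto
      qed
    qed
    then obtain v where v: "v \<in> U" "P v \<le> Q v" "P u = T (R' u v) (P v)" by auto
    have Av: "A v \<le> Ah v"
    proof (rule ccontr)
      assume "\<not> A v \<le> Ah v"
      then have "N (A v) < N (Ah v)" using Nstrict[of "Ah v" "A v"] Ah01 A01 v by auto
      then show False using v P_def Q_def by auto
    qed
    have "residual T (N (Ah v)) (N (R v u)) = N (T (N (Ah v)) (R v u))"
      using res_neg[OF lc, of "N (Ah v)" "R v u"] N01 Ah01 R01 u v N_def by auto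
    also have "T (N (Ah v)) (R v u) = T (R v u) (N (Ah v))"
      using tn_comm[OF tn, of "N (Ah v)" "R v u"] N01[of "Ah v"] Ah01 R01 u v by auto
    also have "\<dots> = N (Ah u)" using v P_def R'_def by auto
    also have "N (N (Ah u)) = Ah u" using NN Ah01 u by auto
    finally show ?thesis using v Av unfolding minus_adj_plus_def N_def by auto
  qed
  show ?thesis using part1 part2 by auto
qed

end
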